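(* Let $\mathbb{F}_q$ be a finite field and let $\mathcal{Q}=\mathbb{F}_q^3$ with the relation: $(x_1,y_1,z_1)$ and $(x_2,y_2,z_2)$ commute iff $x_1y_2-y_1x_2=z_1-z_2$. Then there exist three lines $L_1,L_2,L_3$ in $\mathbb{F}_q^3$ and a non-commuting subset of $\mathcal{Q}$ contained in $L_1\cup L_2\cup L_3$ of cardinality at least $3q-3$. Further, if $q>3$ and $\mathrm{char}(\mathbb{F}_q)\ne 2$, there exists a non-commuting subset of $\mathcal{Q}$ of cardinality $3q-2$ which is not contained in a union of three lines.
   Context: A line in $\mathbb{F}_q^3$ is a set $\{p+tv: t\in\mathbb{F}_q\}$ with $v\ne 0$. A subset of $\mathcal{Q}$ is non-commuting if no two distinct elements of it commute. *)

theory Defs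
  imports Main "HOL-Library.Cardinality"
begin

definition commutes :: "'a::field \<times> 'a \<times> 'a \<Rightarrow> 'a \<times> 'a \<times> 'a \<Rightarrow> bool" where
  "commutes P Q = (case P of (x1, y1, z1) \<Rightarrow> case Q of (x2, y2, z2) \<Rightarrow>
      x1 * y2 - y1 * x2 = z1 - z2)"

definition non_commuting :: "('a::field \<times> 'a \<times> 'a) set \<Rightarrow> bool" where
  "non_commuting S = (\<forall>P\<in>S. \<forall>Q\<in>S. P \<noteq> Q \<longrightarrow> \<not> commutes P Q)"

definition is_line :: "('a::field \<times> 'a \<times> 'a) set \<Rightarrow> bool" where
  "is_line L = (\<exists>p1 p2 p3 v1 v2 v3. (v1, v2, v3) \<noteq> (0, 0, 0) \<and>
      L = {(p1 + t * v1, p2 + t * v2, p3 + t * v3) | t. True})"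

end

theory Submission
  imports Defs
begin

definition SS :: "'a::field \<Rightarrow> ('a \<times> 'a \<times> 'a) set" where
  "SS e = (\<lambda>t. (t,e,0)) ` (-{0}) \<union> (\<lambda>t. (t,0,t)) ` (-{0}) \<union> (\<lambda>t. (t,1,e*t)) ` (-{0})"

lemma aux1:
  fixes a b e :: "'a::field"
  assumes "a + b * e = b + a * e" "e \<noteq> 1" shows "a = b"
proof -
  have "(a - b) * (1 - e) = 0" using assms(1) by (simp add: algebra_simps)
  thus ?thesis using assms(2) by simp
qed

lemma SS_nc:
  fixes e :: "'a::field"
  assumes "e \<noteq> 0" "e \<noteq> 1"
  shows "non_commuting (SS e)"
proof -
  have e1: "1 - e \<noteq> 0" using assms by simp
  show ?thesis
  unfolding non_commuting_def SS_def
  proof (intro ballI impI)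
    fix P Q assume P: "P \<in> (\<lambda>t. (t,e,0)) ` (-{0}) \<union> (\<lambda>t. (t,0,t)) ` (-{0}) \<union> (\<lambda>t. (t,1,e*t)) ` (-{0})"
      and Q: "Q \<in> (\<lambda>t. (t,e,0)) ` (-{0}) \<union> (\<lambda>t. (t,0,t)) ` (-{0}) \<union> (\<lambda>t. (t,1,e*t)) ` (-{0})"
      and ne: "P \<noteq> Q"
    show "\<not> commutes P Q"
      using P Q ne assms e1
      by (auto simp: commutes_def algebra_simps right_diff_distrib[symmetric] dest: sym aux1)
  qed
qed

lemma card_img:
  fixes f :: "'a::{field,finite} \<Rightarrow> 'b"
  assumes "inj f" shows "card (f ` (-{0})) = CARD('a) - 1"
proof -
  have "card (f ` (-{0})) = card (-{0::'a})" using assms by (simp add: card_image inj_on_def inj_def)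
  also have "\<dots> = CARD('a) - 1" by (simp add: Compl_eq_Diff_UNIV card_Diff_singleton)
  finally show ?thesis .
qed

lemma SS_card:
  fixes e :: "'a::{field,finite}"
  assumes "e \<noteq> 0" "e \<noteq> 1"
  shows "card (SS e) = 3 * CARD('a) - 3"
proof -
  let ?A = "(\<lambda>t::'a. (t,e,0::'a)) ` (-{0})" and ?B = "(\<lambda>t::'a. (t,0::'a,t)) ` (-{0})"
    and ?C = "(\<lambda>t::'a. (t,1::'a,e*t)) ` (-{0})"
  have z: "card (-{0::'a}) = CARD('a) - 1" by (simp add: Compl_eq_Diff_UNIV card_Diff_singleton)
  have a: "card ?A = CARD('a) - 1" unfolding z[symmetric] by (rule card_image) (auto simp: inj_on_def)
  have b: "card ?B = CARD('a) - 1" unfolding z[symmetric] by (rule card_image) (auto simp: inj_on_def)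
  have c: "card ?C = CARD('a) - 1" unfolding z[symmetric] by (rule card_image) (auto simp: inj_on_def)
  have d1: "?A \<inter> ?B = {}" using assms by auto
  have d2: "(?A \<union> ?B) \<inter> ?C = {}" using assms by auto
  have "card (SS e) = card (?A \<union> ?B) + card ?C" unfolding SS_def
    by (rule card_Un_disjoint) (use d2 in auto)
  also have "card (?A \<union> ?B) = card ?A + card ?B" by (rule card_Un_disjoint) (use d1 in auto)
  finally show ?thesis using a b c by linarith
qed

lemma line_intro:
  assumes "(v1, v2, v3) \<noteq> (0, 0, 0)"
  shows "is_line {(p1 + t * v1, p2 + t * v2, p3 + t * v3) | t. True}"
  unfolding is_line_def using assms by blast

lemma line_card:
  assumes "is_line (M :: ('a::{field,finite} \<times> 'a \<times> 'a) set)" shows "card M \<le> CARD('a)"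
proof -
  from assms obtain p1 p2 p3 v1 v2 v3 where M: "M = {(p1 + t * v1, p2 + t * v2, p3 + t * v3) | t. True}"
    unfolding is_line_def by blast
  have eq: "M = (\<lambda>t. (p1 + t * v1, p2 + t * v2, p3 + t * v3)) ` UNIV" using M by auto
  have "card M \<le> card (UNIV :: 'a set)" unfolding eq by (rule card_image_le) simp
  thus ?thesis by simp
qed

lemma part1_big:
  assumes "CARD('a::{field,finite}) \<ge> 3"
  shows "\<exists>L1 L2 L3 (S :: ('a \<times> 'a \<times> 'a) set).
            is_line L1 \<and> is_line L2 \<and> is_line L3 \<and> non_commuting S \<and>
            S \<subseteq> L1 \<union> L2 \<union> L3 \<and> card S \<ge> 3 * CARD('a) - 3"
proof -
  have "\<not> (UNIV :: 'a set) \<subseteq> {0,1}"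
  proof
    assume "(UNIV :: 'a set) \<subseteq> {0,1}"
    hence "CARD('a) \<le> card {0,1::'a}" by (metis card_mono finite)
    also have "\<dots> \<le> 2" by (simp add: card_insert_le_m1)
    finally show False using assms by simp
  qed
  then obtain e :: 'a where e: "e \<noteq> 0" "e \<noteq> 1" by blast
  define L1 where "L1 = {(0 + t * 1, e + t * 0, 0 + t * (0::'a)) | t. True}"
  define L2 where "L2 = {(0 + t * 1, 0 + t * 0, 0 + t * (1::'a)) | t. True}"
  define L3 where "L3 = {(0 + t * 1, 1 + t * 0, 0 + t * (e::'a)) | t. True}"
  have l: "is_line L1" "is_line L2" "is_line L3" unfolding L1_def L2_def L3_def by (rule line_intro; simp)+
  have s1: "(t,e,0) \<in> L1" for t unfolding L1_def by (rule CollectI, rule exI[of _ t]) simp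
  have s2: "(t,0,t) \<in> L2" for t unfolding L2_def by (rule CollectI, rule exI[of _ t]) simp
  have s3: "(t,1,e*t) \<in> L3" for t unfolding L3_def by (rule CollectI, rule exI[of _ t]) (simp add: mult.commute)
  have sub: "SS e \<subseteq> L1 \<union> L2 \<union> L3" unfolding SS_def
    by (intro Un_mono image_subsetI s1 s2 s3)
  have cge: "card (SS e) \<ge> 3 * CARD('a) - 3" using SS_card[OF e] by simp
  show ?thesis
    by (rule exI[of _ L1], rule exI[of _ L2], rule exI[of _ L3], rule exI[of _ "SS e"],
        simp only: l sub SS_nc[OF e] cge simp_thms)
qed

lemma one_neq_two: "(1::'a::field) \<noteq> 2"
  by (metis add_cancel_left_right one_add_one zero_neq_one)

lemma part1_small:
  assumes "CARD('a::{field,finite}) < 3"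
  shows "\<exists>L1 L2 L3 (S :: ('a \<times> 'a \<times> 'a) set).
            is_line L1 \<and> is_line L2 \<and> is_line L3 \<and> non_commuting S \<and>
            S \<subseteq> L1 \<union> L2 \<union> L3 \<and> card S \<ge> 3 * CARD('a) - 3"
proof -
  define S where "S = {(1::'a,0::'a,1::'a),(0,0,0),(0,1,1)}"
  define L1 where "L1 = {(1 + t * 1, 0 + t * 0, 1 + t * (0::'a)) | t. True}"
  define L2 where "L2 = {(0 + t * 1, 0 + t * 0, 0 + t * (0::'a)) | t. True}"
  define L3 where "L3 = {(0 + t * 1, 1 + t * 0, 1 + t * (0::'a)) | t. True}"
  have l: "is_line L1" "is_line L2" "is_line L3" unfolding L1_def L2_def L3_def by (rule line_intro; simp)+
  have s1: "(1,0,1) \<in> L1" unfolding L1_def by (rule CollectI, rule exI[of _ 0]) simp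
  have s2: "(0,0,0) \<in> L2" unfolding L2_def by (rule CollectI, rule exI[of _ 0]) simp
  have s3: "(0,1,1) \<in> L3" unfolding L3_def by (rule CollectI, rule exI[of _ 0]) simp
  have sub: "S \<subseteq> L1 \<union> L2 \<union> L3" unfolding S_def using s1 s2 s3 by blast
  have nc: "non_commuting S" unfolding S_def non_commuting_def commutes_def using one_neq_two[where 'a='a] by auto
  have c: "card S = 3" unfolding S_def by (auto simp: card_insert_if)
  have "3 * CARD('a) - 3 \<le> 3" using assms by simp
  hence cge: "card S \<ge> 3 * CARD('a) - 3" using c by simp
  show ?thesis
    by (rule exI[of _ L1], rule exI[of _ L2], rule exI[of _ L3], rule exI[of _ S],
        simp only: l sub nc cge simp_thms)
qed

lemma two_ne:
  assumes "CHAR('a::field) \<noteq> 2" shows "(2::'a) \<noteq> 0"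
proof
  assume "(2::'a) = 0"
  hence "of_nat 2 = (0::'a)" by simp
  hence d: "CHAR('a) dvd 2" by (simp only: of_nat_eq_0_iff_char_dvd)
  have "CHAR('a) \<noteq> 0"
  proof
    assume "CHAR('a) = 0" with d show False by simp
  qed
  hence "CHAR('a) \<le> 2" using d by (simp add: dvd_imp_le)
  moreover have "CHAR('a) \<noteq> 1" using CHAR_not_1[where 'a='a] by simp
  ultimately show False using assms \<open>CHAR('a) \<noteq> 0\<close> by linarith
qed

definition TT :: "'a::field \<Rightarrow> ('a \<times> 'a \<times> 'a) set" where
  "TT y0 = SS (-1) \<union> {(0,y0,0)}"

lemma memT:
  fixes y0 :: "'a::field"
  shows "(x,y,z) \<in> TT y0 \<longleftrightarrow> (x \<noteq> 0 \<and> y = -1 \<and> z = 0) \<or> (x \<noteq> 0 \<and> y = 0 \<and> z = x)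
     \<or> (x \<noteq> 0 \<and> y = 1 \<and> z = -x) \<or> (x = 0 \<and> y = y0 \<and> z = 0)"
  unfolding TT_def SS_def by auto

lemma m2_lem:
  assumes two: "(2::'a::field) \<noteq> 0" shows "(-1::'a) \<noteq> 1"
proof
  assume h: "(-1::'a) = 1"
  have "(2::'a) = 1 + 1" by simp
  also have "\<dots> = 1 + -1" using h by simp
  also have "\<dots> = 0" by simp
  finally show False using two by simp
qed

lemma TT_nc:
  fixes y0 :: "'a::field"
  assumes two: "(2::'a) \<noteq> 0" and y: "y0 \<noteq> 0" "y0 \<noteq> 1" "y0 \<noteq> -1"
  shows "non_commuting (TT y0)"
proof -
  have m1: "(-1::'a) \<noteq> 0" by simp
  have m2: "(-1::'a) \<noteq> 1" using two by (rule m2_lem)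
  have nc: "non_commuting (SS (-1::'a))" by (rule SS_nc[OF m1 m2])
  have a1: "1 - y0 \<noteq> 0" using y by simp
  have a2: "y0 + 1 \<noteq> 0" using y(3) eq_neg_iff_add_eq_0 by blast
  have P: "\<not> commutes (0,y0,0) Q \<and> \<not> commutes Q (0,y0,0)" if "Q \<in> SS (-1)" for Q
  proof -
    from that consider t where "t \<noteq> 0" "Q = (t,-1,0)" | t where "t \<noteq> 0" "Q = (t,0,t)"
      | t where "t \<noteq> 0" "Q = (t,1,-1*t)" unfolding SS_def by auto
    thus ?thesis
    proof cases
      case 1
      have "y0 * t \<noteq> 0" using y 1 by simp
      thus ?thesis using 1 by (simp add: commutes_def)
    next
      case 2
      have h: "(1 - y0) * t \<noteq> 0" using a1 2 by simp
      have e1: "(0 * 0 - y0 * t = 0 - t) \<longleftrightarrow> (1 - y0) * t = 0" by (simp add: algebra_simps eq_neg_iff_add_eq_0 add.commute)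
      have e2: "(t * y0 - 0 * 0 = t - 0) \<longleftrightarrow> (1 - y0) * t = 0" by (simp add: algebra_simps)
      show ?thesis using 2 h e1 e2 unfolding commutes_def by simp
    next
      case 3
      have h: "(y0 + 1) * t \<noteq> 0" using a2 3 by simp
      have e0: "(- (t * y0) = t) = (t + t * y0 = 0)" by (metis add.commute neg_eq_iff_add_eq_0)
      have e1: "(0 * 1 - y0 * t = 0 - -1 * t) \<longleftrightarrow> (y0 + 1) * t = 0" using e0 by (simp add: algebra_simps)
      have e2: "(t * y0 - 1 * 0 = -1 * t - 0) \<longleftrightarrow> (y0 + 1) * t = 0" by (simp add: algebra_simps eq_neg_iff_add_eq_0)
      show ?thesis using 3 h e1 e2 unfolding commutes_def by simp
    qed
  qed
  show ?thesis unfolding non_commuting_def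
  proof (intro ballI impI)
    fix A B assume A: "A \<in> TT y0" and B: "B \<in> TT y0" and ne: "A \<noteq> B"
    show "\<not> commutes A B"
    proof (cases "A = (0,y0,0)")
      case True
      hence "B \<in> SS (-1)" using B ne unfolding TT_def by auto
      thus ?thesis using P True by blast
    next
      case False
      hence A': "A \<in> SS (-1)" using A unfolding TT_def by auto
      show ?thesis
      proof (cases "B = (0,y0,0)")
        case True thus ?thesis using P A' by blast
      next
        case False
        hence "B \<in> SS (-1)" using B unfolding TT_def by auto
        thus ?thesis using nc A' ne unfolding non_commuting_def by blast
      qed
    qed
  qed
qed

lemma TT_card:
  fixes y0 :: "'a::{field,finite}"
  assumes two: "(2::'a) \<noteq> 0" and y: "y0 \<noteq> 0" "y0 \<noteq> 1" "y0 \<noteq> -1" and q: "CARD('a) > 3"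
  shows "card (TT y0) = 3 * CARD('a) - 2"
proof -
  have m1: "(-1::'a) \<noteq> 0" by simp
  have m2: "(-1::'a) \<noteq> 1" using two by (rule m2_lem)
  have "(0,y0,0) \<notin> SS (-1)" using y unfolding SS_def by auto
  hence "card (TT y0) = card (SS (-1::'a)) + 1" unfolding TT_def by simp
  thus ?thesis using SS_card[OF m1 m2] q by simp
qed

lemma TT_noline:
  fixes y0 :: "'a::field"
  assumes two: "(2::'a) \<noteq> 0" and y: "y0 \<noteq> 0" "y0 \<noteq> 1" "y0 \<noteq> -1" and L: "is_line M"
  shows "\<not> M \<subseteq> TT y0"
proof
  assume sub: "M \<subseteq> TT y0"
  from L obtain p1 p2 p3 v1 v2 v3 where v: "(v1, v2, v3) \<noteq> (0, 0, 0)"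
    and M: "M = {(p1 + t * v1, p2 + t * v2, p3 + t * v3) | t. True}"
    unfolding is_line_def by blast
  have mem: "(p1 + t * v1, p2 + t * v2, p3 + t * v3) \<in> TT y0" for t using sub M by blast
  have v2: "v2 = 0"
  proof (rule ccontr)
    assume "v2 \<noteq> 0"
    define t where "t = (- y0 - p2) / v2"
    have yy: "p2 + t * v2 = - y0" using \<open>v2 \<noteq> 0\<close> by (simp add: t_def)
    have "-y0 \<noteq> y0" using two y by (metis add.inverse_inverse mult_2 neg_equal_iff_equal one_add_one distrib_right mult_eq_0_iff minus_zero add.right_inverse)
    moreover have "-y0 \<noteq> 0" "-y0 \<noteq> 1" "-y0 \<noteq> -1" using y by (auto simp: minus_equation_iff)
    ultimately show False using mem[of t] unfolding memT yy by auto
  qed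
  show False
  proof (cases "p2 = y0")
    case True
    have "p1 = 0" "p3 = 0" using mem[of 0] True y by (auto simp: memT)
    moreover have "p1 + v1 = 0" "p3 + v3 = 0" using mem[of 1] True y v2 by (auto simp: memT)
    ultimately show False using v v2 by simp
  next
    case False
    have v1: "v1 = 0"
    proof (rule ccontr)
      assume "v1 \<noteq> 0"
      define t where "t = - p1 / v1"
      have "p1 + t * v1 = 0" using \<open>v1 \<noteq> 0\<close> by (simp add: t_def)
      thus False using mem[of t] False v2 by (auto simp: memT)
    qed
    have "p3 + v3 = p3" using mem[of 0] mem[of 1] v1 v2 two by (auto simp: memT)
    thus False using v v1 v2 by simp
  qed
qed

lemma part2:
  assumes "CARD('a::{field,finite}) > 3" "CHAR('a) \<noteq> 2"
  shows "\<exists>S :: ('a \<times> 'a \<times> 'a) set. non_commuting S \<and> card S = 3 * CARD('a) - 2 \<and>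
               \<not> (\<exists>L1 L2 L3. is_line L1 \<and> is_line L2 \<and> is_line L3 \<and> S \<subseteq> L1 \<union> L2 \<union> L3)"
proof -
  have two: "(2::'a) \<noteq> 0" using two_ne assms(2) by blast
  have "\<not> (UNIV :: 'a set) \<subseteq> {0,1,-1}"
  proof
    assume "(UNIV :: 'a set) \<subseteq> {0,1,-1}"
    hence "CARD('a) \<le> card {0,1,-1::'a}" by (metis card_mono finite)
    also have "\<dots> \<le> 3" by (simp add: card_insert_le_m1)
    finally show False using assms by simp
  qed
  then obtain y0 :: 'a where y: "y0 \<noteq> 0" "y0 \<noteq> 1" "y0 \<noteq> -1" by blast
  have nl: "card (TT y0 \<inter> M) \<le> CARD('a) - 1" if "is_line M" for M
  proof -
    have "\<not> M \<subseteq> TT y0" by (rule TT_noline[OF two y that])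
    hence "TT y0 \<inter> M \<subset> M" by blast
    hence "card (TT y0 \<inter> M) < card M" by (rule psubset_card_mono[rotated]) simp
    thus ?thesis using line_card[OF that] by linarith
  qed
  have no: "\<not> (\<exists>L1 L2 L3. is_line L1 \<and> is_line L2 \<and> is_line L3 \<and> TT y0 \<subseteq> L1 \<union> L2 \<union> L3)"
  proof
    assume "\<exists>L1 L2 L3. is_line L1 \<and> is_line L2 \<and> is_line L3 \<and> TT y0 \<subseteq> L1 \<union> L2 \<union> L3"
    then obtain L1 L2 L3 where l: "is_line L1" "is_line L2" "is_line L3" and s: "TT y0 \<subseteq> L1 \<union> L2 \<union> L3"
      by blast
    have "TT y0 = (TT y0 \<inter> L1) \<union> (TT y0 \<inter> L2) \<union> (TT y0 \<inter> L3)" using s by blast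
    hence c0: "card (TT y0) = card ((TT y0 \<inter> L1) \<union> (TT y0 \<inter> L2) \<union> (TT y0 \<inter> L3))" by simp
    have c1: "card ((TT y0 \<inter> L1) \<union> (TT y0 \<inter> L2) \<union> (TT y0 \<inter> L3)) \<le> card ((TT y0 \<inter> L1) \<union> (TT y0 \<inter> L2)) + card (TT y0 \<inter> L3)" by (rule card_Un_le)
    have c2: "card ((TT y0 \<inter> L1) \<union> (TT y0 \<inter> L2)) \<le> card (TT y0 \<inter> L1) + card (TT y0 \<inter> L2)" by (rule card_Un_le)
    have c3: "card (TT y0) = 3 * CARD('a) - 2" by (rule TT_card[OF two y assms(1)])
    show False using c0 c1 c2 c3 nl[OF l(1)] nl[OF l(2)] nl[OF l(3)] assms(1) by linarith
  qed
  show ?thesis using TT_nc[OF two y] TT_card[OF two y assms(1)] no by blast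
qed

theorem lemma7p5:
  shows "(\<exists>L1 L2 L3 (S :: ('a::{field,finite} \<times> 'a \<times> 'a) set).
            is_line L1 \<and> is_line L2 \<and> is_line L3 \<and> non_commuting S \<and>
            S \<subseteq> L1 \<union> L2 \<union> L3 \<and> card S \<ge> 3 * CARD('a) - 3)
       \<and> (CARD('a) > 3 \<and> CHAR('a) \<noteq> 2 \<longrightarrow>
            (\<exists>S :: ('a \<times> 'a \<times> 'a) set. non_commuting S \<and> card S = 3 * CARD('a) - 2 \<and>
               \<not> (\<exists>L1 L2 L3. is_line L1 \<and> is_line L2 \<and> is_line L3 \<and> S \<subseteq> L1 \<union> L2 \<union> L3)))"
proof (intro conjI impI)
  show "\<exists>L1 L2 L3 (S :: ('a \<times> 'a \<times> 'a) set).
            is_line L1 \<and> is_line L2 \<and> is_line L3 \<and> non_commuting S \<and>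
            S \<subseteq> L1 \<union> L2 \<union> L3 \<and> card S \<ge> 3 * CARD('a) - 3"
  proof (cases "CARD('a) \<ge> 3")
    case True thus ?thesis by (rule part1_big)
  next
    case False thus ?thesis by (intro part1_small) simp
  qed
next
  assume "CARD('a) > 3 \<and> CHAR('a) \<noteq> 2"
  thus "\<exists>S :: ('a \<times> 'a \<times> 'a) set. non_commuting S \<and> card S = 3 * CARD('a) - 2 \<and>
               \<not> (\<exists>L1 L2 L3. is_line L1 \<and> is_line L2 \<and> is_line L3 \<and> S \<subseteq> L1 \<union> L2 \<union> L3)"
    using part2 by blast
qed

end
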